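(* Let $E$ be a crossed module extension of $\Pi_0$ with $\Pi_1$, $(s^1,s^0)$ a section system for $E$, and $M$ an abelian $\Pi_0$-module. (a) For every pointed $2$-cocycle $z\in Z^2_{\mathrm{pt}}(E,M)$ we have $z^{\mathrm{std}}_M(m)=z_M(m[m]^{-1})$ for $m\in M_E$, and for $g,h\in G_E$ \[z^{\mathrm{std}}_G(h,g)=z_M\big([h[\bar h]^{-1}]^{-1}\,{}^h([g[\bar g]^{-1}]^{-1})\,[hg[\overline{hg}]^{-1}]\big)-z_G\big(\mu([\bar h,\bar g]),[\bar h\bar g]\big)+z_G([\bar h],[\bar g]).\] (b) For every pointed $2$-coboundary $b\in B^2_{\mathrm{pt}}(E,M)$ we have $b^{\mathrm{std}}_M=0$, and if $c\in C^1_{\mathrm{pt}}(E,M)$ with $b=dc$, then $b^{\mathrm{std}}_G(h,g)=(dc_0)(\bar h,\bar g)$ for $g,h\in G_E$, where $c_0\in C^1(\Pi_0,M)$ is $c_0(p)=c([p])$.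
   Context: Let $\Pi_0$ be a group, $\Pi_1$ an abelian $\Pi_0$-module (written multiplicatively), $M$ an abelian $\Pi_0$-module (additive). A crossed module is $(G_V,M_V,\mu)$ with left action ${}^gm$ of $G_V$ on $M_V$, $\mu({}^gm)=g\mu(m)g^{-1}$, ${}^{\mu(n)}m=nmn^{-1}$. A crossed module extension $E$ of $\Pi_0$ with $\Pi_1$ is a crossed module $(G_E,M_E,\mu)$ with a monomorphism $\iota:\Pi_1\to M_E$ and epimorphism $\pi:G_E\to\Pi_0$ such that $\Pi_1\to M_E\to G_E\to\Pi_0$ is exact and ${}^g\iota(k)=\iota(\pi(g)\cdot k)$. Write $\bar g=\pi(g)$; $M$ is a $G_E$-module via $\pi$. A section system $(s^1,s^0)$: maps $s^0:\Pi_0\to G_E$ with $s^0(1)=1$, $\pi s^0=\mathrm{id}$, and $s^1:\mu(M_E)\to M_E$ with $s^1(1)=1$, $\mu s^1=\mathrm{id}$. Notation: $[p]:=s^0(p)$; $[x]:=s^1(x)$ for $x\in\mu(M_E)=\ker\pi$ (e.g. $[h[\bar h]^{-1}]=s^1(hs^0(\bar h)^{-1})$); $[m]:=s^1(\mu(m))$ for $m\in M_E$; $[q,p]:=s^1([q][p][qp]^{-1})$. Cochains of $E$: $C^1(E,M)=\mathrm{Map}(G_E,M)$, $C^2(E,M)=\mathrm{Map}(M_E\times G_E\times G_E,M)$, $(dc)(m,h,g)=c(\mu(m)h)-c(hg)+\bar h\cdot c(g)$, $(dc)(p,n,k,m,h,g)=c(p,\mu(n)k,\mu(m)h)-c(pn,k,hg)+c(n\,{}^km,kh,g)-\bar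 k\cdot c(m,h,g)$ on $C^2$; pointed means $c(1)=0$ resp. $c(1,1,1)=0$; $Z^2_{\mathrm{pt}}=Z^2\cap C^2_{\mathrm{pt}}$, $B^2_{\mathrm{pt}}=B^2\cap C^2_{\mathrm{pt}}$. Module and group parts: $c_M(m)=c(m,1,1)$, $c_G(h,g)=c(1,h,g)$; for $m\in M_E$ we write $c_G(m,h)$ for $c_G(\mu(m),h)$. Standardisation: for $z\in Z^2_{\mathrm{pt}}(E,M)$, $\sigma_z\in C^1_{\mathrm{pt}}(E,M)$ is $\sigma_z(g)=z([g[\bar g]^{-1}],[\bar g],1)$ and $z^{\mathrm{std}}:=z-d\sigma_z$. Group cochain differential: $(dc_0)(h,g)=c_0(h)-c_0(hg)+h\cdot c_0(g)$. *)

theory Defs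
  imports "HOL-Algebra.Algebra"
begin

definition action_by_homs ::
  "('g, 'x) monoid_scheme \<Rightarrow> ('a, 'y) monoid_scheme \<Rightarrow> ('g \<Rightarrow> 'a \<Rightarrow> 'a) \<Rightarrow> bool" where
  "action_by_homs G A act \<longleftrightarrow>
     (\<forall>g\<in>carrier G. act g \<in> hom A A) \<and>
     (\<forall>a\<in>carrier A. act \<one>\<^bsub>G\<^esub> a = a) \<and>
     (\<forall>g\<in>carrier G. \<forall>h\<in>carrier G. \<forall>a\<in>carrier A. act (g \<otimes>\<^bsub>G\<^esub> h) a = act g (act h a))"

definition abelian_module ::
  "('p, 'x) monoid_scheme \<Rightarrow> ('a, 'y) monoid_scheme \<Rightarrow> ('p \<Rightarrow> 'a \<Rightarrow> 'a) \<Rightarrow> bool" where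
  "abelian_module P A act \<longleftrightarrow> group P \<and> comm_group A \<and> action_by_homs P A act"

definition crossed_module ::
  "'g monoid \<Rightarrow> 'n monoid \<Rightarrow> ('n \<Rightarrow> 'g) \<Rightarrow> ('g \<Rightarrow> 'n \<Rightarrow> 'n) \<Rightarrow> bool" where
  "crossed_module G N mu act \<longleftrightarrow>
     group G \<and> group N \<and> mu \<in> hom N G \<and> action_by_homs G N act \<and>
     (\<forall>g\<in>carrier G. \<forall>m\<in>carrier N. mu (act g m) = g \<otimes>\<^bsub>G\<^esub> mu m \<otimes>\<^bsub>G\<^esub> inv\<^bsub>G\<^esub> g) \<and>
     (\<forall>n\<in>carrier N. \<forall>m\<in>carrier N. act (mu n) m = n \<otimes>\<^bsub>N\<^esub> m \<otimes>\<^bsub>N\<^esub> inv\<^bsub>N\<^esub> n)"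

text \<open>Crossed module extension of P (= Pi_0) with K (= Pi_1, an abelian P-module via aK).\<close>
definition crossed_module_extension ::
  "'p monoid \<Rightarrow> 'k monoid \<Rightarrow> ('p \<Rightarrow> 'k \<Rightarrow> 'k) \<Rightarrow>
   'g monoid \<Rightarrow> 'n monoid \<Rightarrow> ('n \<Rightarrow> 'g) \<Rightarrow> ('g \<Rightarrow> 'n \<Rightarrow> 'n) \<Rightarrow>
   ('k \<Rightarrow> 'n) \<Rightarrow> ('g \<Rightarrow> 'p) \<Rightarrow> bool" where
  "crossed_module_extension P K aK G N mu act iota prj \<longleftrightarrow>
     crossed_module G N mu act \<and> abelian_module P K aK \<and>
     iota \<in> hom K N \<and> inj_on iota (carrier K) \<and>
     prj \<in> hom G P \<and> prj ` carrier G = carrier P \<and>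
     iota ` carrier K = kernel N G mu \<and>
     mu ` carrier N = kernel G P prj \<and>
     (\<forall>g\<in>carrier G. \<forall>k\<in>carrier K. act g (iota k) = iota (aK (prj g) k))"

definition section_system ::
  "'p monoid \<Rightarrow> 'g monoid \<Rightarrow> 'n monoid \<Rightarrow> ('n \<Rightarrow> 'g) \<Rightarrow> ('g \<Rightarrow> 'p) \<Rightarrow>
   ('g \<Rightarrow> 'n) \<Rightarrow> ('p \<Rightarrow> 'g) \<Rightarrow> bool" where
  "section_system P G N mu prj s1 s0 \<longleftrightarrow>
     (\<forall>p\<in>carrier P. s0 p \<in> carrier G \<and> prj (s0 p) = p) \<and> s0 \<one>\<^bsub>P\<^esub> = \<one>\<^bsub>G\<^esub> \<and>
     (\<forall>x\<in>mu ` carrier N. s1 x \<in> carrier N \<and> mu (s1 x) = x) \<and> s1 \<one>\<^bsub>G\<^esub> = \<one>\<^bsub>N\<^esub>"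

subsection \<open>Cochains (M an abelian group written multiplicatively; 0 = one, + = mult)\<close>

definition C1 :: "'g monoid \<Rightarrow> 'm monoid \<Rightarrow> ('g \<Rightarrow> 'm) set" where
  "C1 G M = carrier G \<rightarrow> carrier M"

definition C1_pt :: "'g monoid \<Rightarrow> 'm monoid \<Rightarrow> ('g \<Rightarrow> 'm) set" where
  "C1_pt G M = {c \<in> C1 G M. c \<one>\<^bsub>G\<^esub> = \<one>\<^bsub>M\<^esub>}"

definition C2 :: "'n monoid \<Rightarrow> 'g monoid \<Rightarrow> 'm monoid \<Rightarrow> ('n \<Rightarrow> 'g \<Rightarrow> 'g \<Rightarrow> 'm) set" where
  "C2 N G M = {c. \<forall>m\<in>carrier N. \<forall>h\<in>carrier G. \<forall>g\<in>carrier G. c m h g \<in> carrier M}"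

definition C2_pt :: "'n monoid \<Rightarrow> 'g monoid \<Rightarrow> 'm monoid \<Rightarrow> ('n \<Rightarrow> 'g \<Rightarrow> 'g \<Rightarrow> 'm) set" where
  "C2_pt N G M = {c \<in> C2 N G M. c \<one>\<^bsub>N\<^esub> \<one>\<^bsub>G\<^esub> \<one>\<^bsub>G\<^esub> = \<one>\<^bsub>M\<^esub>}"

definition d1 ::
  "'g monoid \<Rightarrow> 'm monoid \<Rightarrow> ('n \<Rightarrow> 'g) \<Rightarrow> ('g \<Rightarrow> 'p) \<Rightarrow> ('p \<Rightarrow> 'm \<Rightarrow> 'm) \<Rightarrow>
   ('g \<Rightarrow> 'm) \<Rightarrow> 'n \<Rightarrow> 'g \<Rightarrow> 'g \<Rightarrow> 'm" where
  "d1 G M mu prj aM c = (\<lambda>m h g.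
     c (mu m \<otimes>\<^bsub>G\<^esub> h) \<otimes>\<^bsub>M\<^esub> inv\<^bsub>M\<^esub> (c (h \<otimes>\<^bsub>G\<^esub> g)) \<otimes>\<^bsub>M\<^esub> aM (prj h) (c g))"

definition d2 ::
  "'g monoid \<Rightarrow> 'n monoid \<Rightarrow> 'm monoid \<Rightarrow> ('n \<Rightarrow> 'g) \<Rightarrow> ('g \<Rightarrow> 'n \<Rightarrow> 'n) \<Rightarrow> ('g \<Rightarrow> 'p) \<Rightarrow>
   ('p \<Rightarrow> 'm \<Rightarrow> 'm) \<Rightarrow> ('n \<Rightarrow> 'g \<Rightarrow> 'g \<Rightarrow> 'm) \<Rightarrow> 'n \<Rightarrow> 'n \<Rightarrow> 'g \<Rightarrow> 'n \<Rightarrow> 'g \<Rightarrow> 'g \<Rightarrow> 'm" where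
  "d2 G N M mu act prj aM c = (\<lambda>p n k m h g.
     c p (mu n \<otimes>\<^bsub>G\<^esub> k) (mu m \<otimes>\<^bsub>G\<^esub> h)
     \<otimes>\<^bsub>M\<^esub> inv\<^bsub>M\<^esub> (c (p \<otimes>\<^bsub>N\<^esub> n) k (h \<otimes>\<^bsub>G\<^esub> g))
     \<otimes>\<^bsub>M\<^esub> c (n \<otimes>\<^bsub>N\<^esub> act k m) (k \<otimes>\<^bsub>G\<^esub> h) g
     \<otimes>\<^bsub>M\<^esub> inv\<^bsub>M\<^esub> (aM (prj k) (c m h g)))"

definition Z2_pt ::
  "'g monoid \<Rightarrow> 'n monoid \<Rightarrow> 'm monoid \<Rightarrow> ('n \<Rightarrow> 'g) \<Rightarrow> ('g \<Rightarrow> 'n \<Rightarrow> 'n) \<Rightarrow> ('g \<Rightarrow> 'p) \<Rightarrow>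
   ('p \<Rightarrow> 'm \<Rightarrow> 'm) \<Rightarrow> ('n \<Rightarrow> 'g \<Rightarrow> 'g \<Rightarrow> 'm) set" where
  "Z2_pt G N M mu act prj aM = {c \<in> C2_pt N G M.
     \<forall>p\<in>carrier N. \<forall>n\<in>carrier N. \<forall>k\<in>carrier G. \<forall>m\<in>carrier N. \<forall>h\<in>carrier G. \<forall>g\<in>carrier G.
       d2 G N M mu act prj aM c p n k m h g = \<one>\<^bsub>M\<^esub>}"

definition B2_pt ::
  "'g monoid \<Rightarrow> 'n monoid \<Rightarrow> 'm monoid \<Rightarrow> ('n \<Rightarrow> 'g) \<Rightarrow> ('g \<Rightarrow> 'p) \<Rightarrow>
   ('p \<Rightarrow> 'm \<Rightarrow> 'm) \<Rightarrow> ('n \<Rightarrow> 'g \<Rightarrow> 'g \<Rightarrow> 'm) set" where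
  "B2_pt G N M mu prj aM = {b \<in> C2_pt N G M. \<exists>c\<in>C1 G M.
     \<forall>m\<in>carrier N. \<forall>h\<in>carrier G. \<forall>g\<in>carrier G. b m h g = d1 G M mu prj aM c m h g}"

definition sigma_std ::
  "'g monoid \<Rightarrow> ('g \<Rightarrow> 'p) \<Rightarrow> ('g \<Rightarrow> 'n) \<Rightarrow> ('p \<Rightarrow> 'g) \<Rightarrow> ('n \<Rightarrow> 'g \<Rightarrow> 'g \<Rightarrow> 'm) \<Rightarrow> 'g \<Rightarrow> 'm" where
  "sigma_std G prj s1 s0 z = (\<lambda>g. z (s1 (g \<otimes>\<^bsub>G\<^esub> inv\<^bsub>G\<^esub> (s0 (prj g)))) (s0 (prj g)) \<one>\<^bsub>G\<^esub>)"

definition std ::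
  "'g monoid \<Rightarrow> 'm monoid \<Rightarrow> ('n \<Rightarrow> 'g) \<Rightarrow> ('g \<Rightarrow> 'p) \<Rightarrow> ('p \<Rightarrow> 'm \<Rightarrow> 'm) \<Rightarrow>
   ('g \<Rightarrow> 'n) \<Rightarrow> ('p \<Rightarrow> 'g) \<Rightarrow> ('n \<Rightarrow> 'g \<Rightarrow> 'g \<Rightarrow> 'm) \<Rightarrow> 'n \<Rightarrow> 'g \<Rightarrow> 'g \<Rightarrow> 'm" where
  "std G M mu prj aM s1 s0 z = (\<lambda>m h g.
     z m h g \<otimes>\<^bsub>M\<^esub> inv\<^bsub>M\<^esub> (d1 G M mu prj aM (sigma_std G prj s1 s0 z) m h g))"

definition part_M :: "'g monoid \<Rightarrow> ('n \<Rightarrow> 'g \<Rightarrow> 'g \<Rightarrow> 'm) \<Rightarrow> 'n \<Rightarrow> 'm" where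
  "part_M G c = (\<lambda>m. c m \<one>\<^bsub>G\<^esub> \<one>\<^bsub>G\<^esub>)"

definition part_G :: "'n monoid \<Rightarrow> ('n \<Rightarrow> 'g \<Rightarrow> 'g \<Rightarrow> 'm) \<Rightarrow> 'g \<Rightarrow> 'g \<Rightarrow> 'm" where
  "part_G N c = (\<lambda>h g. c \<one>\<^bsub>N\<^esub> h g)"

definition d_grp ::
  "'p monoid \<Rightarrow> 'm monoid \<Rightarrow> ('p \<Rightarrow> 'm \<Rightarrow> 'm) \<Rightarrow> ('p \<Rightarrow> 'm) \<Rightarrow> 'p \<Rightarrow> 'p \<Rightarrow> 'm" where
  "d_grp P M aM c0 = (\<lambda>h g. c0 h \<otimes>\<^bsub>M\<^esub> inv\<^bsub>M\<^esub> (c0 (h \<otimes>\<^bsub>P\<^esub> g)) \<otimes>\<^bsub>M\<^esub> aM h (c0 g))"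

end

theory Submission
  imports Defs
begin


primrec evl :: "('a,'b) monoid_scheme \<Rightarrow> (nat \<Rightarrow> 'a) \<Rightarrow> (nat \<times> int) list \<Rightarrow> 'a" where
  "evl M e [] = \<one>\<^bsub>M\<^esub>"
| "evl M e (p # xs) = e (fst p) [^]\<^bsub>M\<^esub> (snd p) \<otimes>\<^bsub>M\<^esub> evl M e xs"

definition cnt :: "(nat \<times> int) list \<Rightarrow> nat \<Rightarrow> int" where
  "cnt xs i = sum_list (map snd (filter (\<lambda>p. fst p = i) xs))"

definition negl :: "(nat \<times> int) list \<Rightarrow> (nat \<times> int) list" where
  "negl xs = map (\<lambda>p. (fst p, - snd p)) xs"

definition scl :: "int \<Rightarrow> (nat \<times> int) list \<Rightarrow> (nat \<times> int) list" where
  "scl c xs = map (\<lambda>p. (fst p, c * snd p)) xs"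

lemma fst_negl[simp]: "fst ` set (negl xs) = fst ` set xs"
  by (simp add: negl_def image_image)
lemma fst_scl[simp]: "fst ` set (scl c xs) = fst ` set xs"
  by (simp add: scl_def image_image)
lemma fst_concat_hs: "fst ` set (concat (map (\<lambda>(c,l,r). scl c (l @ negl r)) hs)) = fst ` set (concat (map (\<lambda>(c,l,r). l @ r) hs))"
proof (induction hs)
  case (Cons h hs) then show ?case by (cases h) (simp add: image_Un Un_assoc)
qed simp

lemma cnt_Nil[simp]: "cnt [] i = 0" by (simp add: cnt_def)
lemma cnt_Cons[simp]: "cnt (p # xs) i = (if fst p = i then snd p else 0) + cnt xs i"
  by (simp add: cnt_def)
lemma cnt_append: "cnt (xs @ ys) i = cnt xs i + cnt ys i"
  by (simp add: cnt_def)

context comm_group begin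

lemma evl_closed: "\<forall>i. e i \<in> carrier G \<Longrightarrow> evl G e xs \<in> carrier G"
  by (induction xs) auto

lemma evl_rep:
  assumes e: "\<forall>i. e i \<in> carrier G" and fin: "finite S"
  shows "fst ` set xs \<subseteq> S \<Longrightarrow> evl G e xs = (\<Otimes>i\<in>S. e i [^] cnt xs i)"
proof (induction xs)
  case Nil
  then show ?case by simp
next
  case (Cons p xs)
  obtain i n where p: "p = (i, n)" by (cases p)
  have iS: "i \<in> S" using Cons.prems p by auto
  have IH: "evl G e xs = (\<Otimes>i\<in>S. e i [^] cnt xs i)" using Cons by auto
  have "(\<Otimes>j\<in>S. e j [^] cnt (p # xs) j)
      = (\<Otimes>j\<in>S. (if i = j then e j [^] n else \<one>) \<otimes> e j [^] cnt xs j)"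
    apply (rule finprod_cong')
    using e by (auto simp: p int_pow_mult)
  also have "\<dots> = (\<Otimes>j\<in>S. (if i = j then e j [^] n else \<one>)) \<otimes> (\<Otimes>j\<in>S. e j [^] cnt xs j)"
    using e by (intro finprod_multf) auto
  also have "(\<Otimes>j\<in>S. (if i = j then e j [^] n else \<one>)) = e i [^] n"
    using finprod_singleton[OF iS fin, of "\<lambda>j. e j [^] n"] e by auto
  finally show ?case using IH p by simp
qed

lemma evl_append: "\<forall>i. e i \<in> carrier G \<Longrightarrow> evl G e (xs @ ys) = evl G e xs \<otimes> evl G e ys"
  by (induction xs) (auto simp: m_assoc evl_closed)

lemma evl_negl: "\<forall>i. e i \<in> carrier G \<Longrightarrow> evl G e (negl xs) = inv (evl G e xs)"
  by (induction xs) (auto simp: negl_def int_pow_neg evl_closed inv_mult m_comm)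

lemma evl_scl: "\<forall>i. e i \<in> carrier G \<Longrightarrow> evl G e (scl c xs) = evl G e xs [^] c"
proof (induction xs)
  case Nil then show ?case by (simp add: scl_def)
next
  case (Cons p xs)
  then show ?case
    by (simp add: scl_def int_pow_distrib evl_closed int_pow_pow mult.commute)
qed

lemma evl_comb:
  assumes e: "\<forall>i. e i \<in> carrier G"
    and hs: "list_all (\<lambda>(c,l,r). evl G e l = evl G e r) hs"
    and chk: "list_all (\<lambda>i. cnt (l @ negl r) i = cnt (concat (map (\<lambda>(c,l,r). scl c (l @ negl r)) hs)) i)
                 (map fst (l @ r @ concat (map (\<lambda>(c,l,r). l @ r) hs)))"
  shows "evl G e l = evl G e r"
proof -
  define S where "S = fst ` set (l @ r @ concat (map (\<lambda>(c,l,r). l @ r) hs))"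
  have fin: "finite S" unfolding S_def by (rule finite_imageI, rule finite_set)
  have s1: "fst ` set (l @ negl r) \<subseteq> S"
    unfolding S_def set_append image_Un fst_negl by blast
  have s2: "fst ` set (concat (map (\<lambda>(c,l,r). scl c (l @ negl r)) hs)) \<subseteq> S"
    unfolding fst_concat_hs S_def by (intro image_mono) auto
  have one: "evl G e (concat (map (\<lambda>(c,l,r). scl c (l @ negl r)) hs)) = \<one>"
    using hs
  proof (induction hs)
    case Nil then show ?case by simp
  next
    case (Cons h hs)
    obtain c l1 r1 where h: "h = (c,l1,r1)" by (cases h)
    have eq: "evl G e l1 = evl G e r1" using Cons.prems h by simp
    have "evl G e (scl c (l1 @ negl r1)) = \<one>"
      using e by (simp add: evl_scl evl_append evl_negl eq evl_closed)
    then show ?case using Cons h e by (simp add: evl_append)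
  qed
  have "evl G e (l @ negl r) = evl G e (concat (map (\<lambda>(c,l,r). scl c (l @ negl r)) hs))"
    unfolding evl_rep[OF e fin s1] evl_rep[OF e fin s2]
  proof (rule finprod_cong'[OF refl])
    have cntS: "\<forall>i\<in>S. cnt (l @ negl r) i = cnt (concat (map (\<lambda>(c,l,r). scl c (l @ negl r)) hs)) i"
      using chk unfolding list_all_iff S_def set_map by blast
    show "(\<lambda>i. e i [^] cnt (concat (map (\<lambda>(c,l,r). scl c (l @ negl r)) hs)) i) \<in> S \<rightarrow> carrier G"
      using e by auto
    fix i assume "i \<in> S"
    then show "e i [^] cnt (l @ negl r) i = e i [^] cnt (concat (map (\<lambda>(c,l,r). scl c (l @ negl r)) hs)) i"
      using cntS by simp
  qed
  then have "evl G e l \<otimes> inv (evl G e r) = \<one>"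
    using one e by (simp add: evl_append evl_negl)
  then show ?thesis using e evl_closed
    by (metis inv_closed inv_equality inv_inv)
qed

end

definition lk :: "('a,'b) monoid_scheme \<Rightarrow> 'a list \<Rightarrow> nat \<Rightarrow> 'a" where
  "lk M xs i = (if i < length xs then xs ! i else \<one>\<^bsub>M\<^esub>)"

lemma (in comm_group) lk_closed: "set xs \<subseteq> carrier G \<Longrightarrow> \<forall>i. lk G xs i \<in> carrier G"
  by (auto simp: lk_def)

lemma (in comm_group) abel:
  assumes "set xs \<subseteq> carrier G"
    and "list_all (\<lambda>(c,l,r). evl G (lk G xs) l = evl G (lk G xs) r) hs"
    and "list_all (\<lambda>i. cnt (l @ negl r) i = cnt (concat (map (\<lambda>(c,l,r). scl c (l @ negl r)) hs)) i)
                 (map fst (l @ r @ concat (map (\<lambda>(c,l,r). l @ r) hs)))"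
  shows "evl G (lk G xs) l = evl G (lk G xs) r"
  using evl_comb[OF lk_closed[OF assms(1)] assms(2,3)] .



locale cm = G: group G + N: group N + P: group P + M: comm_group M
  for G :: "'g monoid" and N :: "'n monoid" and P :: "'p monoid" and M :: "'m monoid" +
  fixes mu :: "'n \<Rightarrow> 'g" and act :: "'g \<Rightarrow> 'n \<Rightarrow> 'n" and prj :: "'g \<Rightarrow> 'p"
    and s1 :: "'g \<Rightarrow> 'n" and s0 :: "'p \<Rightarrow> 'g" and aM :: "'p \<Rightarrow> 'm \<Rightarrow> 'm"
  assumes mu_hom: "mu \<in> hom N G"
    and act_hom: "g \<in> carrier G \<Longrightarrow> act g \<in> hom N N"
    and act_mult: "g \<in> carrier G \<Longrightarrow> h \<in> carrier G \<Longrightarrow> m \<in> carrier N \<Longrightarrow>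
        act (g \<otimes>\<^bsub>G\<^esub> h) m = act g (act h m)"
    and peif1: "g \<in> carrier G \<Longrightarrow> m \<in> carrier N \<Longrightarrow>
        mu (act g m) = g \<otimes>\<^bsub>G\<^esub> mu m \<otimes>\<^bsub>G\<^esub> inv\<^bsub>G\<^esub> g"
    and peif2: "n \<in> carrier N \<Longrightarrow> m \<in> carrier N \<Longrightarrow>
        act (mu n) m = n \<otimes>\<^bsub>N\<^esub> m \<otimes>\<^bsub>N\<^esub> inv\<^bsub>N\<^esub> n"
    and prj_hom: "prj \<in> hom G P"
    and img: "mu ` carrier N = kernel G P prj"
    and s0_closed: "p \<in> carrier P \<Longrightarrow> s0 p \<in> carrier G"
    and s0_prj: "p \<in> carrier P \<Longrightarrow> prj (s0 p) = p"
    and s0_one: "s0 \<one>\<^bsub>P\<^esub> = \<one>\<^bsub>G\<^esub>"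
    and s1_closed': "x \<in> mu ` carrier N \<Longrightarrow> s1 x \<in> carrier N"
    and s1_mu': "x \<in> mu ` carrier N \<Longrightarrow> mu (s1 x) = x"
    and s1_one: "s1 \<one>\<^bsub>G\<^esub> = \<one>\<^bsub>N\<^esub>"
    and aM_hom: "p \<in> carrier P \<Longrightarrow> aM p \<in> hom M M"
    and aM_one: "y \<in> carrier M \<Longrightarrow> aM \<one>\<^bsub>P\<^esub> y = y"
begin

lemmas abel_simps = lk_def M.int_pow_neg M.int_pow_1 negl_def scl_def M.m_ac M.inv_mult

sublocale muh: group_hom N G mu by unfold_locales (rule mu_hom)
sublocale prjh: group_hom G P prj by unfold_locales (rule prj_hom)

lemma act_gh: "g \<in> carrier G \<Longrightarrow> group_hom N N (act g)"
  by unfold_locales (rule act_hom)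
lemma aM_gh: "p \<in> carrier P \<Longrightarrow> group_hom M M (aM p)"
  by unfold_locales (rule aM_hom)

lemma act_closed[simp]: "g \<in> carrier G \<Longrightarrow> m \<in> carrier N \<Longrightarrow> act g m \<in> carrier N"
  using group_hom.hom_closed[OF act_gh] by blast
lemma act_inv: "g \<in> carrier G \<Longrightarrow> m \<in> carrier N \<Longrightarrow> act g (inv\<^bsub>N\<^esub> m) = inv\<^bsub>N\<^esub> (act g m)"
  using group_hom.hom_inv[OF act_gh] by blast
lemma act_oneN[simp]: "g \<in> carrier G \<Longrightarrow> act g \<one>\<^bsub>N\<^esub> = \<one>\<^bsub>N\<^esub>"
  using group_hom.hom_one[OF act_gh] by blast
lemma aM_closed[simp]: "p \<in> carrier P \<Longrightarrow> x \<in> carrier M \<Longrightarrow> aM p x \<in> carrier M"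
  using group_hom.hom_closed[OF aM_gh] by blast
lemma aM_oneM[simp]: "p \<in> carrier P \<Longrightarrow> aM p \<one>\<^bsub>M\<^esub> = \<one>\<^bsub>M\<^esub>"
  using group_hom.hom_one[OF aM_gh] by blast
lemma aM_mult: "p \<in> carrier P \<Longrightarrow> x \<in> carrier M \<Longrightarrow> y \<in> carrier M \<Longrightarrow>
    aM p (x \<otimes>\<^bsub>M\<^esub> y) = aM p x \<otimes>\<^bsub>M\<^esub> aM p y"
  using group_hom.hom_mult[OF aM_gh] by blast
lemma aM_inv: "p \<in> carrier P \<Longrightarrow> x \<in> carrier M \<Longrightarrow> aM p (inv\<^bsub>M\<^esub> x) = inv\<^bsub>M\<^esub> (aM p x)"
  using group_hom.hom_inv[OF aM_gh] by blast

lemma prj_mu[simp]: "m \<in> carrier N \<Longrightarrow> prj (mu m) = \<one>\<^bsub>P\<^esub>"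
  using img by (auto simp: kernel_def)

lemma s1_ker: assumes "x \<in> carrier G" "prj x = \<one>\<^bsub>P\<^esub>"
  shows "s1 x \<in> carrier N" "mu (s1 x) = x"
proof -
  have "x \<in> mu ` carrier N" using img assms by (auto simp: kernel_def)
  then show "s1 x \<in> carrier N" "mu (s1 x) = x" using s1_closed' s1_mu' by auto
qed

lemma s1_mu[simp]: "m \<in> carrier N \<Longrightarrow> mu (s1 (mu m)) = mu m"
  using s1_ker by simp
lemma s1_mu_closed[simp]: "m \<in> carrier N \<Longrightarrow> s1 (mu m) \<in> carrier N"
  using s1_ker by simp

lemma s0_closed'[simp]: "g \<in> carrier G \<Longrightarrow> s0 (prj g) \<in> carrier G"
  by (simp add: s0_closed)
lemma s0_prj'[simp]: "g \<in> carrier G \<Longrightarrow> prj (s0 (prj g)) = prj g"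
  by (simp add: s0_prj)

lemma u_facts: assumes "g \<in> carrier G"
  shows "s1 (g \<otimes>\<^bsub>G\<^esub> inv\<^bsub>G\<^esub> s0 (prj g)) \<in> carrier N"
    "mu (s1 (g \<otimes>\<^bsub>G\<^esub> inv\<^bsub>G\<^esub> s0 (prj g))) \<otimes>\<^bsub>G\<^esub> s0 (prj g) = g"
proof -
  have k: "prj (g \<otimes>\<^bsub>G\<^esub> inv\<^bsub>G\<^esub> s0 (prj g)) = \<one>\<^bsub>P\<^esub>"
    using assms by simp
  show "s1 (g \<otimes>\<^bsub>G\<^esub> inv\<^bsub>G\<^esub> s0 (prj g)) \<in> carrier N"
    using s1_ker(1)[OF _ k] assms by simp
  show "mu (s1 (g \<otimes>\<^bsub>G\<^esub> inv\<^bsub>G\<^esub> s0 (prj g))) \<otimes>\<^bsub>G\<^esub> s0 (prj g) = g"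
    using s1_ker(2)[OF _ k] assms by (simp add: G.m_assoc)
qed

end

locale cmz = cm +
  fixes z
  assumes zC[simp]: "\<And>m h g. m \<in> carrier N \<Longrightarrow> h \<in> carrier G \<Longrightarrow> g \<in> carrier G \<Longrightarrow> z m h g \<in> carrier M"
    and zpt: "z \<one>\<^bsub>N\<^esub> \<one>\<^bsub>G\<^esub> \<one>\<^bsub>G\<^esub> = \<one>\<^bsub>M\<^esub>"
    and coc: "\<And>p n k m h g. p \<in> carrier N \<Longrightarrow> n \<in> carrier N \<Longrightarrow> k \<in> carrier G \<Longrightarrow> m \<in> carrier N \<Longrightarrow>
       h \<in> carrier G \<Longrightarrow> g \<in> carrier G \<Longrightarrow> d2 G N M mu act prj aM z p n k m h g = \<one>\<^bsub>M\<^esub>"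
begin


lemma C: assumes "p \<in> carrier N" "n \<in> carrier N" "k \<in> carrier G" "m \<in> carrier N"
       "h \<in> carrier G" "g \<in> carrier G"
  shows "z p (mu n \<otimes>\<^bsub>G\<^esub> k) (mu m \<otimes>\<^bsub>G\<^esub> h) \<otimes>\<^bsub>M\<^esub> z (n \<otimes>\<^bsub>N\<^esub> act k m) (k \<otimes>\<^bsub>G\<^esub> h) g
    = z (p \<otimes>\<^bsub>N\<^esub> n) k (h \<otimes>\<^bsub>G\<^esub> g) \<otimes>\<^bsub>M\<^esub> aM (prj k) (z m h g)"
proof -
  let ?A = "z p (mu n \<otimes>\<^bsub>G\<^esub> k) (mu m \<otimes>\<^bsub>G\<^esub> h)"
  let ?B = "z (p \<otimes>\<^bsub>N\<^esub> n) k (h \<otimes>\<^bsub>G\<^esub> g)"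
  let ?C = "z (n \<otimes>\<^bsub>N\<^esub> act k m) (k \<otimes>\<^bsub>G\<^esub> h) g"
  let ?D = "aM (prj k) (z m h g)"
  have d: "?A \<otimes>\<^bsub>M\<^esub> inv\<^bsub>M\<^esub> ?B \<otimes>\<^bsub>M\<^esub> ?C \<otimes>\<^bsub>M\<^esub> inv\<^bsub>M\<^esub> ?D = \<one>\<^bsub>M\<^esub>"
    using coc[OF assms] by (simp add: d2_def)
  have "evl M (lk M [?A,?B,?C,?D]) [(0,1),(2,1)] = evl M (lk M [?A,?B,?C,?D]) [(1,1),(3,1)]"
    apply (rule M.abel[where hs = "[(1, [(0,1),(1,-1),(2,1),(3,-1)], [])]"])
    using d assms by (simp_all add: abel_simps)
  then show ?thesis using assms by (simp add: abel_simps)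
qed

lemma D1: assumes "g \<in> carrier G" shows "z \<one>\<^bsub>N\<^esub> \<one>\<^bsub>G\<^esub> g = \<one>\<^bsub>M\<^esub>"
  using C[of "\<one>\<^bsub>N\<^esub>" "\<one>\<^bsub>N\<^esub>" "\<one>\<^bsub>G\<^esub>" "\<one>\<^bsub>N\<^esub>" "\<one>\<^bsub>G\<^esub>" g] assms zpt by (simp add: aM_one)

lemma D2: assumes "k \<in> carrier G" shows "z \<one>\<^bsub>N\<^esub> k \<one>\<^bsub>G\<^esub> = \<one>\<^bsub>M\<^esub>"
  using C[of "\<one>\<^bsub>N\<^esub>" "\<one>\<^bsub>N\<^esub>" k "\<one>\<^bsub>N\<^esub>" "\<one>\<^bsub>G\<^esub>" "\<one>\<^bsub>G\<^esub>"] assms zpt by (simp add: aM_one)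


lemma R1: assumes "p \<in> carrier N" "k \<in> carrier G" "g \<in> carrier G"
  shows "z p k g = z p k \<one>\<^bsub>G\<^esub> \<otimes>\<^bsub>M\<^esub> z \<one>\<^bsub>N\<^esub> k g"
  using C[of p "\<one>\<^bsub>N\<^esub>" k "\<one>\<^bsub>N\<^esub>" "\<one>\<^bsub>G\<^esub>" g] assms by (simp add: D1 D2)

lemma R2: assumes "p \<in> carrier N" "n \<in> carrier N" "k \<in> carrier G"
  shows "z (p \<otimes>\<^bsub>N\<^esub> n) k \<one>\<^bsub>G\<^esub> = z p (mu n \<otimes>\<^bsub>G\<^esub> k) \<one>\<^bsub>G\<^esub> \<otimes>\<^bsub>M\<^esub> z n k \<one>\<^bsub>G\<^esub>"
  using C[of p n k "\<one>\<^bsub>N\<^esub>" "\<one>\<^bsub>G\<^esub>" "\<one>\<^bsub>G\<^esub>"] assms zpt by simp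

lemma R3: assumes "n \<in> carrier N" "k \<in> carrier G" "h \<in> carrier G"
  shows "z n k \<one>\<^bsub>G\<^esub> \<otimes>\<^bsub>M\<^esub> z \<one>\<^bsub>N\<^esub> k h = z \<one>\<^bsub>N\<^esub> (mu n \<otimes>\<^bsub>G\<^esub> k) h \<otimes>\<^bsub>M\<^esub> z n (k \<otimes>\<^bsub>G\<^esub> h) \<one>\<^bsub>G\<^esub>"
  using C[of "\<one>\<^bsub>N\<^esub>" n k "\<one>\<^bsub>N\<^esub>" h "\<one>\<^bsub>G\<^esub>"] R1[of n k h] assms by (simp add: D1 D2)

lemma R4: assumes "m \<in> carrier N" "k \<in> carrier G"
  shows "z \<one>\<^bsub>N\<^esub> k (mu m) \<otimes>\<^bsub>M\<^esub> z (act k m) k \<one>\<^bsub>G\<^esub> = aM (prj k) (z m \<one>\<^bsub>G\<^esub> \<one>\<^bsub>G\<^esub>)"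
  using C[of "\<one>\<^bsub>N\<^esub>" "\<one>\<^bsub>N\<^esub>" k m "\<one>\<^bsub>G\<^esub>" "\<one>\<^bsub>G\<^esub>"] assms by (simp add: D1 D2)

lemma R5: assumes "k \<in> carrier G" "h \<in> carrier G" "g \<in> carrier G"
  shows "z \<one>\<^bsub>N\<^esub> k h \<otimes>\<^bsub>M\<^esub> z \<one>\<^bsub>N\<^esub> (k \<otimes>\<^bsub>G\<^esub> h) g = z \<one>\<^bsub>N\<^esub> k (h \<otimes>\<^bsub>G\<^esub> g) \<otimes>\<^bsub>M\<^esub> aM (prj k) (z \<one>\<^bsub>N\<^esub> h g)"
  using C[of "\<one>\<^bsub>N\<^esub>" "\<one>\<^bsub>N\<^esub>" k "\<one>\<^bsub>N\<^esub>" h g] assms by (simp add: D1 D2)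

lemma K: assumes "v \<in> carrier N" "mu v = \<one>\<^bsub>G\<^esub>" "k \<in> carrier G"
  shows "z v k \<one>\<^bsub>G\<^esub> = z v \<one>\<^bsub>G\<^esub> \<one>\<^bsub>G\<^esub>"
  using R3[of v "\<one>\<^bsub>G\<^esub>" k] assms by (simp add: D1 D2)


lemma coreG:
  assumes h: "h \<in> carrier G" and g: "g \<in> carrier G" and A: "A \<in> carrier G" and B: "B \<in> carrier G"
    and q: "q \<in> carrier G" and a: "a \<in> carrier N" and b: "b \<in> carrier N" and c: "c \<in> carrier N"
    and w: "w \<in> carrier N"
    and ha: "mu a \<otimes>\<^bsub>G\<^esub> A = h" and hb: "mu b \<otimes>\<^bsub>G\<^esub> B = g" and hc: "mu c \<otimes>\<^bsub>G\<^esub> q = h \<otimes>\<^bsub>G\<^esub> g"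
    and hw: "mu w \<otimes>\<^bsub>G\<^esub> q = A \<otimes>\<^bsub>G\<^esub> B" and prjA: "prj A = prj h"
  shows "z \<one>\<^bsub>N\<^esub> h g \<otimes>\<^bsub>M\<^esub> inv\<^bsub>M\<^esub> (z a A \<one>\<^bsub>G\<^esub> \<otimes>\<^bsub>M\<^esub> inv\<^bsub>M\<^esub> (z c q \<one>\<^bsub>G\<^esub>) \<otimes>\<^bsub>M\<^esub> aM (prj h) (z b B \<one>\<^bsub>G\<^esub>))
    = z (inv\<^bsub>N\<^esub> a \<otimes>\<^bsub>N\<^esub> act h (inv\<^bsub>N\<^esub> b) \<otimes>\<^bsub>N\<^esub> c) \<one>\<^bsub>G\<^esub> \<one>\<^bsub>G\<^esub> \<otimes>\<^bsub>M\<^esub> inv\<^bsub>M\<^esub> (z \<one>\<^bsub>N\<^esub> (mu w) q) \<otimes>\<^bsub>M\<^esub> z \<one>\<^bsub>N\<^esub> A B"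
proof -
  define b' where "b' = act A b"
  define t where "t = inv\<^bsub>N\<^esub> a \<otimes>\<^bsub>N\<^esub> c"
  define y where "y = inv\<^bsub>N\<^esub> b' \<otimes>\<^bsub>N\<^esub> t"
  define v where "v = y \<otimes>\<^bsub>N\<^esub> inv\<^bsub>N\<^esub> w"
  have b': "b' \<in> carrier N" using A b by (simp add: b'_def)
  have t: "t \<in> carrier N" using a c by (simp add: t_def)
  have y: "y \<in> carrier N" using b' t by (simp add: y_def)
  have v: "v \<in> carrier N" using y w by (simp add: v_def)
  have hP: "prj h \<in> carrier P" using h by simp
  have mub': "A \<otimes>\<^bsub>G\<^esub> mu b = mu b' \<otimes>\<^bsub>G\<^esub> A"
    using A b by (simp add: b'_def peif1 G.m_assoc)
  have at: "a \<otimes>\<^bsub>N\<^esub> t = c" using a c by (simp add: t_def N.m_assoc[symmetric])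
  have by': "b' \<otimes>\<^bsub>N\<^esub> y = t" using b' t by (simp add: y_def N.m_assoc[symmetric])
  have vw: "v \<otimes>\<^bsub>N\<^esub> w = y" using y w by (simp add: v_def N.m_assoc)
  have mutq: "mu t \<otimes>\<^bsub>G\<^esub> q = A \<otimes>\<^bsub>G\<^esub> g"
  proof -
    have "mu t \<otimes>\<^bsub>G\<^esub> q = inv\<^bsub>G\<^esub> (mu a) \<otimes>\<^bsub>G\<^esub> (mu c \<otimes>\<^bsub>G\<^esub> q)" using a c q by (simp add: t_def G.m_assoc)
    also have "\<dots> = inv\<^bsub>G\<^esub> (mu a) \<otimes>\<^bsub>G\<^esub> (mu a \<otimes>\<^bsub>G\<^esub> A \<otimes>\<^bsub>G\<^esub> g)" using hc ha by simp
    also have "\<dots> = A \<otimes>\<^bsub>G\<^esub> g" using a A g by (simp add: G.m_assoc[symmetric])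
    finally show ?thesis .
  qed
  have muyq: "mu y \<otimes>\<^bsub>G\<^esub> q = A \<otimes>\<^bsub>G\<^esub> B"
  proof -
    have "mu y \<otimes>\<^bsub>G\<^esub> q = inv\<^bsub>G\<^esub> (mu b') \<otimes>\<^bsub>G\<^esub> (mu t \<otimes>\<^bsub>G\<^esub> q)" using b' t q by (simp add: y_def G.m_assoc)
    also have "\<dots> = inv\<^bsub>G\<^esub> (mu b') \<otimes>\<^bsub>G\<^esub> (A \<otimes>\<^bsub>G\<^esub> mu b \<otimes>\<^bsub>G\<^esub> B)" using mutq hb A b B by (simp add: G.m_assoc)
    also have "\<dots> = inv\<^bsub>G\<^esub> (mu b') \<otimes>\<^bsub>G\<^esub> (mu b' \<otimes>\<^bsub>G\<^esub> A \<otimes>\<^bsub>G\<^esub> B)" using mub' by simp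
    also have "\<dots> = A \<otimes>\<^bsub>G\<^esub> B" using b' A B by (simp add: G.m_assoc[symmetric])
    finally show ?thesis .
  qed
  have muv: "mu v = \<one>\<^bsub>G\<^esub>"
  proof -
    have "mu y = mu w" using muyq hw y w q by (metis G.r_cancel muh.hom_closed)
    then show ?thesis using y w by (simp add: v_def)
  qed
  have X: "inv\<^bsub>N\<^esub> a \<otimes>\<^bsub>N\<^esub> act h (inv\<^bsub>N\<^esub> b) \<otimes>\<^bsub>N\<^esub> c = y"
  proof -
    have "act h (inv\<^bsub>N\<^esub> b) = act (mu a) (act A (inv\<^bsub>N\<^esub> b))" using ha a A b by (metis act_mult muh.hom_closed N.inv_closed)
    also have "\<dots> = act (mu a) (inv\<^bsub>N\<^esub> b')" using a A b by (simp add: act_inv b'_def)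
    also have "\<dots> = a \<otimes>\<^bsub>N\<^esub> inv\<^bsub>N\<^esub> b' \<otimes>\<^bsub>N\<^esub> inv\<^bsub>N\<^esub> a" using a b' by (simp add: peif2)
    finally have "inv\<^bsub>N\<^esub> a \<otimes>\<^bsub>N\<^esub> act h (inv\<^bsub>N\<^esub> b) \<otimes>\<^bsub>N\<^esub> c = inv\<^bsub>N\<^esub> a \<otimes>\<^bsub>N\<^esub> (a \<otimes>\<^bsub>N\<^esub> inv\<^bsub>N\<^esub> b' \<otimes>\<^bsub>N\<^esub> inv\<^bsub>N\<^esub> a) \<otimes>\<^bsub>N\<^esub> c" by simp
    also have "\<dots> = inv\<^bsub>N\<^esub> b' \<otimes>\<^bsub>N\<^esub> (inv\<^bsub>N\<^esub> a \<otimes>\<^bsub>N\<^esub> c)" using a b' c by (simp add: N.m_assoc[symmetric])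
    finally show ?thesis by (simp add: y_def t_def)
  qed
  have f1: "z a A \<one>\<^bsub>G\<^esub> \<otimes>\<^bsub>M\<^esub> z \<one>\<^bsub>N\<^esub> A g = z \<one>\<^bsub>N\<^esub> h g \<otimes>\<^bsub>M\<^esub> z a (A \<otimes>\<^bsub>G\<^esub> g) \<one>\<^bsub>G\<^esub>"
    using R3[of a A g] a A g ha by simp
  have f2: "z \<one>\<^bsub>N\<^esub> A (mu b) \<otimes>\<^bsub>M\<^esub> z \<one>\<^bsub>N\<^esub> (mu b' \<otimes>\<^bsub>G\<^esub> A) B = z \<one>\<^bsub>N\<^esub> A g \<otimes>\<^bsub>M\<^esub> aM (prj h) (z \<one>\<^bsub>N\<^esub> (mu b) B)"
    using R5[of A "mu b" B] A b B mub' hb prjA by simp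
  have f3: "z \<one>\<^bsub>N\<^esub> A (mu b) \<otimes>\<^bsub>M\<^esub> z b' A \<one>\<^bsub>G\<^esub> = aM (prj h) (z b \<one>\<^bsub>G\<^esub> \<one>\<^bsub>G\<^esub>)"
    using R4[of b A] A b prjA by (simp add: b'_def)
  have f4: "z b' A \<one>\<^bsub>G\<^esub> \<otimes>\<^bsub>M\<^esub> z \<one>\<^bsub>N\<^esub> A B = z \<one>\<^bsub>N\<^esub> (mu b' \<otimes>\<^bsub>G\<^esub> A) B \<otimes>\<^bsub>M\<^esub> z b' (A \<otimes>\<^bsub>G\<^esub> B) \<one>\<^bsub>G\<^esub>"
    using R3[of b' A B] b' A B by simp
  have f5: "aM (prj h) (z b \<one>\<^bsub>G\<^esub> \<one>\<^bsub>G\<^esub>) = aM (prj h) (z \<one>\<^bsub>N\<^esub> (mu b) B) \<otimes>\<^bsub>M\<^esub> aM (prj h) (z b B \<one>\<^bsub>G\<^esub>)"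
    using R3[of b "\<one>\<^bsub>G\<^esub>" B] b B hP by (simp add: D1 aM_mult)
  have f6: "z c q \<one>\<^bsub>G\<^esub> = z a (A \<otimes>\<^bsub>G\<^esub> g) \<one>\<^bsub>G\<^esub> \<otimes>\<^bsub>M\<^esub> z t q \<one>\<^bsub>G\<^esub>"
    using R2[of a t q] a t q at mutq by simp
  have f7: "z t q \<one>\<^bsub>G\<^esub> = z b' (A \<otimes>\<^bsub>G\<^esub> B) \<one>\<^bsub>G\<^esub> \<otimes>\<^bsub>M\<^esub> z y q \<one>\<^bsub>G\<^esub>"
    using R2[of b' y q] b' y q by' muyq by simp
  have f8: "z y q \<one>\<^bsub>G\<^esub> = z v (A \<otimes>\<^bsub>G\<^esub> B) \<one>\<^bsub>G\<^esub> \<otimes>\<^bsub>M\<^esub> z w q \<one>\<^bsub>G\<^esub>"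
    using R2[of v w q] v w q vw hw by simp
  have f10a: "z v (A \<otimes>\<^bsub>G\<^esub> B) \<one>\<^bsub>G\<^esub> = z v \<one>\<^bsub>G\<^esub> \<one>\<^bsub>G\<^esub>"
    using K[of v "A \<otimes>\<^bsub>G\<^esub> B"] v muv A B by simp
  have f9: "z y \<one>\<^bsub>G\<^esub> \<one>\<^bsub>G\<^esub> = z v (mu w) \<one>\<^bsub>G\<^esub> \<otimes>\<^bsub>M\<^esub> z w \<one>\<^bsub>G\<^esub> \<one>\<^bsub>G\<^esub>"
    using R2[of v w "\<one>\<^bsub>G\<^esub>"] v w vw by simp
  have f10b: "z v (mu w) \<one>\<^bsub>G\<^esub> = z v \<one>\<^bsub>G\<^esub> \<one>\<^bsub>G\<^esub>"
    using K[of v "mu w"] v muv w by simp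
  have f11: "z w \<one>\<^bsub>G\<^esub> \<one>\<^bsub>G\<^esub> = z \<one>\<^bsub>N\<^esub> (mu w) q \<otimes>\<^bsub>M\<^esub> z w q \<one>\<^bsub>G\<^esub>"
    using R3[of w "\<one>\<^bsub>G\<^esub>" q] w q by (simp add: D1)
  note cl = h g A B q a b c w b' t y v hP
  let ?env = "[z \<one>\<^bsub>N\<^esub> h g, z a A \<one>\<^bsub>G\<^esub>, z c q \<one>\<^bsub>G\<^esub>, aM (prj h) (z b B \<one>\<^bsub>G\<^esub>), z y \<one>\<^bsub>G\<^esub> \<one>\<^bsub>G\<^esub>, z \<one>\<^bsub>N\<^esub> (mu w) q,
     z \<one>\<^bsub>N\<^esub> A B, z \<one>\<^bsub>N\<^esub> A g, z a (A \<otimes>\<^bsub>G\<^esub> g) \<one>\<^bsub>G\<^esub>, z \<one>\<^bsub>N\<^esub> A (mu b), z \<one>\<^bsub>N\<^esub> (mu b' \<otimes>\<^bsub>G\<^esub> A) B,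
     aM (prj h) (z \<one>\<^bsub>N\<^esub> (mu b) B), z b' A \<one>\<^bsub>G\<^esub>, aM (prj h) (z b \<one>\<^bsub>G\<^esub> \<one>\<^bsub>G\<^esub>), z b' (A \<otimes>\<^bsub>G\<^esub> B) \<one>\<^bsub>G\<^esub>,
     z t q \<one>\<^bsub>G\<^esub>, z y q \<one>\<^bsub>G\<^esub>, z v (A \<otimes>\<^bsub>G\<^esub> B) \<one>\<^bsub>G\<^esub>, z w q \<one>\<^bsub>G\<^esub>, z v \<one>\<^bsub>G\<^esub> \<one>\<^bsub>G\<^esub>, z v (mu w) \<one>\<^bsub>G\<^esub>, z w \<one>\<^bsub>G\<^esub> \<one>\<^bsub>G\<^esub>]"
  have "evl M (lk M ?env) [(0,1),(1,-1),(2,1),(3,-1)] = evl M (lk M ?env) [(4,1),(5,-1),(6,1)]"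
    apply (rule M.abel[where hs = "[(-1, [(1,1),(7,1)], [(0,1),(8,1)]),
       (-1, [(9,1),(10,1)], [(7,1),(11,1)]),
       (1, [(9,1),(12,1)], [(13,1)]),
       (-1, [(12,1),(6,1)], [(10,1),(14,1)]),
       (1, [(13,1)], [(11,1),(3,1)]),
       (1, [(2,1)], [(8,1),(15,1)]),
       (1, [(15,1)], [(14,1),(16,1)]),
       (1, [(16,1)], [(17,1),(18,1)]),
       (1, [(17,1)], [(19,1)]),
       (-1, [(4,1)], [(20,1),(21,1)]),
       (-1, [(20,1)], [(19,1)]),
       (-1, [(21,1)], [(5,1),(18,1)])]"])
      apply (use h g A B q a b c w b' t y v hP in simp)
     apply (simp only: list.pred_inject prod.case)
     apply (intro conjI)
                subgoal by (use f1 cl in \<open>simp add: abel_simps\<close>)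
               subgoal by (use f2 cl in \<open>simp add: abel_simps\<close>)
              subgoal by (use f3 cl in \<open>simp add: abel_simps\<close>)
             subgoal by (use f4 cl in \<open>simp add: abel_simps\<close>)
            subgoal by (use f5 cl in \<open>simp add: abel_simps\<close>)
           subgoal by (use f6 cl in \<open>simp add: abel_simps\<close>)
          subgoal by (use f7 cl in \<open>simp add: abel_simps\<close>)
         subgoal by (use f8 cl in \<open>simp add: abel_simps\<close>)
        subgoal by (use f10a cl in \<open>simp add: abel_simps\<close>)
       subgoal by (use f9 cl in \<open>simp add: abel_simps\<close>)
      subgoal by (use f10b cl in \<open>simp add: abel_simps\<close>)
     subgoal by (use f11 cl in \<open>simp add: abel_simps\<close>)
    apply simp
    apply (simp add: negl_def scl_def)
    done
  then show ?thesis using X h g A B q a b c w b' t y v hP by (simp add: abel_simps)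
qed


lemma coreM: assumes m: "m \<in> carrier N"
  shows "z m \<one>\<^bsub>G\<^esub> \<one>\<^bsub>G\<^esub> \<otimes>\<^bsub>M\<^esub> inv\<^bsub>M\<^esub> (z (s1 (mu m)) \<one>\<^bsub>G\<^esub> \<one>\<^bsub>G\<^esub>) = z (m \<otimes>\<^bsub>N\<^esub> inv\<^bsub>N\<^esub> (s1 (mu m))) \<one>\<^bsub>G\<^esub> \<one>\<^bsub>G\<^esub>"
proof -
  define s where "s = s1 (mu m)"
  define p where "p = m \<otimes>\<^bsub>N\<^esub> inv\<^bsub>N\<^esub> s"
  have s: "s \<in> carrier N" "mu s = mu m" using m by (auto simp: s_def)
  have p: "p \<in> carrier N" using m s by (simp add: p_def)
  have mup: "mu p = \<one>\<^bsub>G\<^esub>" using m s by (simp add: p_def)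
  have ps: "p \<otimes>\<^bsub>N\<^esub> s = m" using m s by (simp add: p_def N.m_assoc)
  have "z m \<one>\<^bsub>G\<^esub> \<one>\<^bsub>G\<^esub> = z p \<one>\<^bsub>G\<^esub> \<one>\<^bsub>G\<^esub> \<otimes>\<^bsub>M\<^esub> z s \<one>\<^bsub>G\<^esub> \<one>\<^bsub>G\<^esub>"
    using R2[of p s "\<one>\<^bsub>G\<^esub>"] K[of p "mu s"] p s mup ps m by simp
  then show ?thesis using p s by (simp add: s_def[symmetric] p_def[symmetric] M.m_assoc)
qed

end

context cm
begin

lemma coreB:
  assumes c: "c \<in> carrier G \<rightarrow> carrier M"
    and hb: "\<forall>m\<in>carrier N. \<forall>h\<in>carrier G. \<forall>g\<in>carrier G. b m h g = d1 G M mu prj aM c m h g"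
  shows "m \<in> carrier N \<Longrightarrow> part_M G (std G M mu prj aM s1 s0 b) m = \<one>\<^bsub>M\<^esub>"
    and "c \<one>\<^bsub>G\<^esub> = \<one>\<^bsub>M\<^esub> \<Longrightarrow> h \<in> carrier G \<Longrightarrow> g \<in> carrier G \<Longrightarrow>
       part_G N (std G M mu prj aM s1 s0 b) h g = d_grp P M aM (\<lambda>p. c (s0 p)) (prj h) (prj g)"
proof -
  have cC[simp]: "x \<in> carrier G \<Longrightarrow> c x \<in> carrier M" for x using c by auto
  have bv: "b m h g = c (mu m \<otimes>\<^bsub>G\<^esub> h) \<otimes>\<^bsub>M\<^esub> inv\<^bsub>M\<^esub> (c (h \<otimes>\<^bsub>G\<^esub> g)) \<otimes>\<^bsub>M\<^esub> aM (prj h) (c g)"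
    if "m \<in> carrier N" "h \<in> carrier G" "g \<in> carrier G" for m h g
    using hb that by (simp add: d1_def)
  {
    assume m: "m \<in> carrier N"
    show "part_M G (std G M mu prj aM s1 s0 b) m = \<one>\<^bsub>M\<^esub>"
      using m by (simp add: part_M_def std_def d1_def sigma_std_def bv s0_one s1_one aM_one M.m_assoc)
  }
  {
    assume c1: "c \<one>\<^bsub>G\<^esub> = \<one>\<^bsub>M\<^esub>" and h: "h \<in> carrier G" and g: "g \<in> carrier G"
    have sig: "sigma_std G prj s1 s0 b x = c x \<otimes>\<^bsub>M\<^esub> inv\<^bsub>M\<^esub> (c (s0 (prj x)))" if x: "x \<in> carrier G" for x
      using x u_facts[OF x] by (simp add: sigma_std_def bv c1)
    have hP: "prj h \<in> carrier P" using h by simp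
    have gP: "prj g \<in> carrier P" using g by simp
    have qG: "s0 (prj h \<otimes>\<^bsub>P\<^esub> prj g) \<in> carrier G" using hP gP by (simp add: s0_closed)
    let ?env = "[c h, c (h \<otimes>\<^bsub>G\<^esub> g), aM (prj h) (c g), c (s0 (prj h)), c (s0 (prj h \<otimes>\<^bsub>P\<^esub> prj g)), aM (prj h) (c (s0 (prj g)))]"
    have "evl M (lk M ?env) [(0,1),(1,-1),(2,1),(0,-1),(3,1),(1,1),(4,-1),(2,-1),(5,1)]
        = evl M (lk M ?env) [(3,1),(4,-1),(5,1)]"
      by (rule M.abel[where hs = "[]"]) (simp_all add: h g hP qG negl_def scl_def)
    then show "part_G N (std G M mu prj aM s1 s0 b) h g = d_grp P M aM (\<lambda>p. c (s0 p)) (prj h) (prj g)"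
      using h g hP qG
      by (simp add: part_G_def std_def d1_def sig bv d_grp_def aM_mult aM_inv abel_simps)
  }
qed

end
theorem proposition4p4:
  fixes P :: "'p monoid" and K :: "'k monoid" and aK :: "'p \<Rightarrow> 'k \<Rightarrow> 'k"
    and G :: "'g monoid" and N :: "'n monoid" and mu :: "'n \<Rightarrow> 'g" and act :: "'g \<Rightarrow> 'n \<Rightarrow> 'n"
    and iota :: "'k \<Rightarrow> 'n" and prj :: "'g \<Rightarrow> 'p"
    and s1 :: "'g \<Rightarrow> 'n" and s0 :: "'p \<Rightarrow> 'g"
    and M :: "'m monoid" and aM :: "'p \<Rightarrow> 'm \<Rightarrow> 'm"
  assumes E: "crossed_module_extension P K aK G N mu act iota prj"
    and S: "section_system P G N mu prj s1 s0"
    and Mmod: "abelian_module P M aM"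
  shows
   "(\<forall>z \<in> Z2_pt G N M mu act prj aM.
      (\<forall>m\<in>carrier N.
         part_M G (std G M mu prj aM s1 s0 z) m
           = part_M G z (m \<otimes>\<^bsub>N\<^esub> inv\<^bsub>N\<^esub> (s1 (mu m)))) \<and>
      (\<forall>h\<in>carrier G. \<forall>g\<in>carrier G.
         part_G N (std G M mu prj aM s1 s0 z) h g
           = part_M G z
               (inv\<^bsub>N\<^esub> (s1 (h \<otimes>\<^bsub>G\<^esub> inv\<^bsub>G\<^esub> (s0 (prj h))))
                \<otimes>\<^bsub>N\<^esub> act h (inv\<^bsub>N\<^esub> (s1 (g \<otimes>\<^bsub>G\<^esub> inv\<^bsub>G\<^esub> (s0 (prj g)))))
                \<otimes>\<^bsub>N\<^esub> s1 ((h \<otimes>\<^bsub>G\<^esub> g) \<otimes>\<^bsub>G\<^esub> inv\<^bsub>G\<^esub> (s0 (prj (h \<otimes>\<^bsub>G\<^esub> g)))))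
             \<otimes>\<^bsub>M\<^esub> inv\<^bsub>M\<^esub> (part_G N z
                  (mu (s1 (s0 (prj h) \<otimes>\<^bsub>G\<^esub> s0 (prj g) \<otimes>\<^bsub>G\<^esub> inv\<^bsub>G\<^esub> (s0 (prj h \<otimes>\<^bsub>P\<^esub> prj g)))))
                  (s0 (prj h \<otimes>\<^bsub>P\<^esub> prj g)))
             \<otimes>\<^bsub>M\<^esub> part_G N z (s0 (prj h)) (s0 (prj g)))) \<and>
    (\<forall>b \<in> B2_pt G N M mu prj aM.
      (\<forall>m\<in>carrier N. part_M G (std G M mu prj aM s1 s0 b) m = \<one>\<^bsub>M\<^esub>) \<and>
      (\<forall>c \<in> C1_pt G M.
         (\<forall>m\<in>carrier N. \<forall>h\<in>carrier G. \<forall>g\<in>carrier G. b m h g = d1 G M mu prj aM c m h g) \<longrightarrow>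
         (\<forall>h\<in>carrier G. \<forall>g\<in>carrier G.
            part_G N (std G M mu prj aM s1 s0 b) h g = d_grp P M aM (\<lambda>p. c (s0 p)) (prj h) (prj g))))"
proof -
  have cmI: "cm G N P M mu act prj s1 s0 aM"
    unfolding cm_def cm_axioms_def using E S Mmod
    by (auto simp: crossed_module_extension_def crossed_module_def abelian_module_def
        action_by_homs_def section_system_def comm_group_def)
  interpret cm G N P M mu act prj s1 s0 aM by (rule cmI)
  have partA: "(\<forall>m\<in>carrier N.
         part_M G (std G M mu prj aM s1 s0 z) m
           = part_M G z (m \<otimes>\<^bsub>N\<^esub> inv\<^bsub>N\<^esub> (s1 (mu m)))) \<and>
      (\<forall>h\<in>carrier G. \<forall>g\<in>carrier G.
         part_G N (std G M mu prj aM s1 s0 z) h g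
           = part_M G z
               (inv\<^bsub>N\<^esub> (s1 (h \<otimes>\<^bsub>G\<^esub> inv\<^bsub>G\<^esub> (s0 (prj h))))
                \<otimes>\<^bsub>N\<^esub> act h (inv\<^bsub>N\<^esub> (s1 (g \<otimes>\<^bsub>G\<^esub> inv\<^bsub>G\<^esub> (s0 (prj g)))))
                \<otimes>\<^bsub>N\<^esub> s1 ((h \<otimes>\<^bsub>G\<^esub> g) \<otimes>\<^bsub>G\<^esub> inv\<^bsub>G\<^esub> (s0 (prj (h \<otimes>\<^bsub>G\<^esub> g)))))
             \<otimes>\<^bsub>M\<^esub> inv\<^bsub>M\<^esub> (part_G N z
                  (mu (s1 (s0 (prj h) \<otimes>\<^bsub>G\<^esub> s0 (prj g) \<otimes>\<^bsub>G\<^esub> inv\<^bsub>G\<^esub> (s0 (prj h \<otimes>\<^bsub>P\<^esub> prj g)))))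
                  (s0 (prj h \<otimes>\<^bsub>P\<^esub> prj g)))
             \<otimes>\<^bsub>M\<^esub> part_G N z (s0 (prj h)) (s0 (prj g)))"
    if zZ: "z \<in> Z2_pt G N M mu act prj aM" for z
  proof -
    interpret cmz G N P M mu act prj s1 s0 aM z
    proof
      show "\<And>m h g. m \<in> carrier N \<Longrightarrow> h \<in> carrier G \<Longrightarrow> g \<in> carrier G \<Longrightarrow> z m h g \<in> carrier M"
        using zZ by (auto simp: Z2_pt_def C2_pt_def C2_def)
      show "z \<one>\<^bsub>N\<^esub> \<one>\<^bsub>G\<^esub> \<one>\<^bsub>G\<^esub> = \<one>\<^bsub>M\<^esub>"
        using zZ by (auto simp: Z2_pt_def C2_pt_def)
      show "\<And>p n k m h g. p \<in> carrier N \<Longrightarrow> n \<in> carrier N \<Longrightarrow> k \<in> carrier G \<Longrightarrow> m \<in> carrier N \<Longrightarrow>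
       h \<in> carrier G \<Longrightarrow> g \<in> carrier G \<Longrightarrow> d2 G N M mu act prj aM z p n k m h g = \<one>\<^bsub>M\<^esub>"
        using zZ by (auto simp: Z2_pt_def)
    qed
    show ?thesis
    proof (intro conjI ballI)
      fix m assume m: "m \<in> carrier N"
      show "part_M G (std G M mu prj aM s1 s0 z) m = part_M G z (m \<otimes>\<^bsub>N\<^esub> inv\<^bsub>N\<^esub> (s1 (mu m)))"
        using coreM[OF m] m by (simp add: part_M_def std_def d1_def sigma_std_def s0_one s1_one zpt aM_one)
    next
      fix h g assume h: "h \<in> carrier G" and g: "g \<in> carrier G"
      define A where "A = s0 (prj h)"
      define B where "B = s0 (prj g)"
      define q where "q = s0 (prj h \<otimes>\<^bsub>P\<^esub> prj g)"
      define a where "a = s1 (h \<otimes>\<^bsub>G\<^esub> inv\<^bsub>G\<^esub> (s0 (prj h)))"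
      define b where "b = s1 (g \<otimes>\<^bsub>G\<^esub> inv\<^bsub>G\<^esub> (s0 (prj g)))"
      define c where "c = s1 ((h \<otimes>\<^bsub>G\<^esub> g) \<otimes>\<^bsub>G\<^esub> inv\<^bsub>G\<^esub> (s0 (prj (h \<otimes>\<^bsub>G\<^esub> g))))"
      define w where "w = s1 (A \<otimes>\<^bsub>G\<^esub> B \<otimes>\<^bsub>G\<^esub> inv\<^bsub>G\<^esub> q)"
      have hP: "prj h \<in> carrier P" and gP: "prj g \<in> carrier P" using h g by auto
      have A: "A \<in> carrier G" and B: "B \<in> carrier G" using h g by (auto simp: A_def B_def)
      have q: "q \<in> carrier G" using hP gP by (simp add: q_def s0_closed)
      have prjq: "prj q = prj h \<otimes>\<^bsub>P\<^esub> prj g" using hP gP by (simp add: q_def s0_prj)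
      have hg: "h \<otimes>\<^bsub>G\<^esub> g \<in> carrier G" using h g by simp
      have qeq: "s0 (prj (h \<otimes>\<^bsub>G\<^esub> g)) = q" using h g by (simp add: q_def)
      have a: "a \<in> carrier N" and ha: "mu a \<otimes>\<^bsub>G\<^esub> A = h"
        using u_facts[OF h] by (auto simp: a_def A_def)
      have b: "b \<in> carrier N" and hb: "mu b \<otimes>\<^bsub>G\<^esub> B = g"
        using u_facts[OF g] by (auto simp: b_def B_def)
      have c: "c \<in> carrier N" and hc: "mu c \<otimes>\<^bsub>G\<^esub> q = h \<otimes>\<^bsub>G\<^esub> g"
        using u_facts[OF hg] qeq by (auto simp: c_def)
      have ABq: "A \<otimes>\<^bsub>G\<^esub> B \<otimes>\<^bsub>G\<^esub> inv\<^bsub>G\<^esub> q \<in> carrier G" using A B q by simp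
      have prjw: "prj (A \<otimes>\<^bsub>G\<^esub> B \<otimes>\<^bsub>G\<^esub> inv\<^bsub>G\<^esub> q) = \<one>\<^bsub>P\<^esub>"
        using A B q hP gP prjq h g by (simp add: A_def B_def)
      have w: "w \<in> carrier N" and muw: "mu w = A \<otimes>\<^bsub>G\<^esub> B \<otimes>\<^bsub>G\<^esub> inv\<^bsub>G\<^esub> q"
        using s1_ker[OF ABq prjw] by (auto simp: w_def)
      have hw: "mu w \<otimes>\<^bsub>G\<^esub> q = A \<otimes>\<^bsub>G\<^esub> B" using muw A B q by (simp add: G.m_assoc)
      have prjA: "prj A = prj h" using h by (simp add: A_def)
      note core = coreG[OF h g A B q a b c w ha hb hc hw prjA]
      show "part_G N (std G M mu prj aM s1 s0 z) h g
           = part_M G z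
               (inv\<^bsub>N\<^esub> (s1 (h \<otimes>\<^bsub>G\<^esub> inv\<^bsub>G\<^esub> (s0 (prj h))))
                \<otimes>\<^bsub>N\<^esub> act h (inv\<^bsub>N\<^esub> (s1 (g \<otimes>\<^bsub>G\<^esub> inv\<^bsub>G\<^esub> (s0 (prj g)))))
                \<otimes>\<^bsub>N\<^esub> s1 ((h \<otimes>\<^bsub>G\<^esub> g) \<otimes>\<^bsub>G\<^esub> inv\<^bsub>G\<^esub> (s0 (prj (h \<otimes>\<^bsub>G\<^esub> g)))))
             \<otimes>\<^bsub>M\<^esub> inv\<^bsub>M\<^esub> (part_G N z
                  (mu (s1 (s0 (prj h) \<otimes>\<^bsub>G\<^esub> s0 (prj g) \<otimes>\<^bsub>G\<^esub> inv\<^bsub>G\<^esub> (s0 (prj h \<otimes>\<^bsub>P\<^esub> prj g)))))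
                  (s0 (prj h \<otimes>\<^bsub>P\<^esub> prj g)))
             \<otimes>\<^bsub>M\<^esub> part_G N z (s0 (prj h)) (s0 (prj g))"
        unfolding part_G_def part_M_def std_def d1_def sigma_std_def
        using core h g
        unfolding w_def a_def b_def c_def A_def B_def q_def
        by simp
    qed
  qed
  have partB: "(\<forall>m\<in>carrier N. part_M G (std G M mu prj aM s1 s0 bb) m = \<one>\<^bsub>M\<^esub>) \<and>
      (\<forall>c \<in> C1_pt G M.
         (\<forall>m\<in>carrier N. \<forall>h\<in>carrier G. \<forall>g\<in>carrier G. bb m h g = d1 G M mu prj aM c m h g) \<longrightarrow>
         (\<forall>h\<in>carrier G. \<forall>g\<in>carrier G.
            part_G N (std G M mu prj aM s1 s0 bb) h g = d_grp P M aM (\<lambda>p. c (s0 p)) (prj h) (prj g)))"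
    if bB: "bb \<in> B2_pt G N M mu prj aM" for bb
  proof (intro conjI ballI impI)
    obtain c where c: "c \<in> C1 G M"
      and hb: "\<forall>m\<in>carrier N. \<forall>h\<in>carrier G. \<forall>g\<in>carrier G. bb m h g = d1 G M mu prj aM c m h g"
      using bB by (auto simp: B2_pt_def)
    fix m assume "m \<in> carrier N"
    then show "part_M G (std G M mu prj aM s1 s0 bb) m = \<one>\<^bsub>M\<^esub>"
      using coreB(1)[of c bb m] c hb by (simp add: C1_def)
  next
    fix c h g assume c: "c \<in> C1_pt G M"
      and hb: "\<forall>m\<in>carrier N. \<forall>h\<in>carrier G. \<forall>g\<in>carrier G. bb m h g = d1 G M mu prj aM c m h g"
      and h: "h \<in> carrier G" and g: "g \<in> carrier G"
    show "part_G N (std G M mu prj aM s1 s0 bb) h g = d_grp P M aM (\<lambda>p. c (s0 p)) (prj h) (prj g)"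
      using coreB(2)[of c bb h g] c hb h g by (simp add: C1_pt_def C1_def)
  qed
  show ?thesis using partA partB by blast
qed
end
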